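(* The poset $(\mathcal C_n,\preceq)$ is graded and its rank (the length of any maximal chain) equals $$\frac{9n^5-10n^3+4^{1+(-1)^n}\,n}{240}.$$
   Context: Let $[0,n]=\{0,\dots,n\}$. A corner-sum hypermatrix of order $n$ is an integer array $C=(C_{i,j,k})_{i,j,k\in[0,n]}$ such that for all $i,j\in[0,n]$: $C_{i,j,0}=C_{i,0,j}=C_{0,i,j}=0$, $C_{i,j,n}=C_{i,n,j}=C_{n,i,j}=ij$, and for all $k\in\{1,\dots,n\}$ each of $C_{i,j,k}-C_{i,j,k-1}$, $C_{i,k,j}-C_{i,k-1,j}$, $C_{k,i,j}-C_{k-1,i,j}$ is an integer in $\{\max(0,i+j-n),\dots,\min(i,j)\}$. $\mathcal C_n$ is the set of these, ordered by $C\preceq D$ iff $C\ge D$ entrywise. *)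

theory Defs
  imports Complex_Main
begin

(* Hypermatrices are total functions nat => nat => nat => int; only indices in [0,n]
   matter, and we normalise by requiring the entries outside [0,n]^3 to be 0. *)

definition step_ok :: "nat \<Rightarrow> nat \<Rightarrow> nat \<Rightarrow> int \<Rightarrow> bool" where
  "step_ok n i j d \<longleftrightarrow> max 0 (int i + int j - int n) \<le> d \<and> d \<le> int (min i j)"

definition corner_sum :: "nat \<Rightarrow> (nat \<Rightarrow> nat \<Rightarrow> nat \<Rightarrow> int) \<Rightarrow> bool" where
  "corner_sum n C \<longleftrightarrow>
     (\<forall>i j k. (n < i \<or> n < j \<or> n < k) \<longrightarrow> C i j k = 0) \<and>
     (\<forall>i\<le>n. \<forall>j\<le>n. C i j 0 = 0 \<and> C i 0 j = 0 \<and> C 0 i j = 0) \<and>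
     (\<forall>i\<le>n. \<forall>j\<le>n. C i j n = int (i * j) \<and> C i n j = int (i * j) \<and> C n i j = int (i * j)) \<and>
     (\<forall>i\<le>n. \<forall>j\<le>n. \<forall>k\<in>{1..n}.
        step_ok n i j (C i j k - C i j (k - 1)) \<and>
        step_ok n i j (C i k j - C i (k - 1) j) \<and>
        step_ok n i j (C k i j - C (k - 1) i j))"

definition CS :: "nat \<Rightarrow> (nat \<Rightarrow> nat \<Rightarrow> nat \<Rightarrow> int) set" where
  "CS n = {C. corner_sum n C}"

definition prec :: "nat \<Rightarrow> (nat \<Rightarrow> nat \<Rightarrow> nat \<Rightarrow> int) \<Rightarrow> (nat \<Rightarrow> nat \<Rightarrow> nat \<Rightarrow> int) \<Rightarrow> bool" where
  "prec n C D \<longleftrightarrow> (\<forall>i\<le>n. \<forall>j\<le>n. \<forall>k\<le>n. D i j k \<le> C i j k)"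

definition is_chain :: "'a set \<Rightarrow> ('a \<Rightarrow> 'a \<Rightarrow> bool) \<Rightarrow> 'a set \<Rightarrow> bool" where
  "is_chain P le S \<longleftrightarrow> S \<subseteq> P \<and> (\<forall>x\<in>S. \<forall>y\<in>S. le x y \<or> le y x)"

definition is_maximal_chain :: "'a set \<Rightarrow> ('a \<Rightarrow> 'a \<Rightarrow> bool) \<Rightarrow> 'a set \<Rightarrow> bool" where
  "is_maximal_chain P le S \<longleftrightarrow> is_chain P le S \<and> (\<forall>T. is_chain P le T \<and> S \<subseteq> T \<longrightarrow> T = S)"

definition chain_length :: "'a set \<Rightarrow> nat" where
  "chain_length S = card S - 1"

definition graded_of_rank :: "'a set \<Rightarrow> ('a \<Rightarrow> 'a \<Rightarrow> bool) \<Rightarrow> nat \<Rightarrow> bool" where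
  "graded_of_rank P le r \<longleftrightarrow> finite P \<and> P \<noteq> {} \<and>
     (\<forall>S. is_maximal_chain P le S \<longrightarrow> chain_length S = r)"

end

theory Submission
  imports Defs "HOL-Library.FuncSet"
begin

lemma nat_induct2':
  fixes n :: nat
  assumes "P 0" "P 1" "\<And>n. P n \<Longrightarrow> P (n+2)"
  shows "P n"
proof (induction n rule: less_induct)
  case (less n)
  show ?case
  proof (cases "n < 2")
    case True then show ?thesis using assms by (cases n) (auto simp: less_Suc_eq)
  next
    case False
    then obtain m where "n = m + 2" by (metis add.commute le_Suc_ex not_less)
    then show ?thesis using less assms(3) by auto
  qed
qed

lemma sum_shift2:
  fixes f :: "nat \<Rightarrow> 'a::comm_monoid_add"
  shows "(\<Sum>i\<le>n+2. f i) = f 0 + (\<Sum>i\<le>n. f (i+1)) + f (n+2)"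
proof -
  have "(\<Sum>i\<le>n+2. f i) = (\<Sum>i\<le>Suc (Suc n). f i)" by simp
  also have "\<dots> = (\<Sum>i\<le>Suc n. f i) + f (Suc (Suc n))" by (rule sum.atMost_Suc)
  also have "(\<Sum>i\<le>Suc n. f i) = f 0 + (\<Sum>i\<le>n. f (Suc i))" by (rule sum.atMost_Suc_shift)
  finally show ?thesis by (simp add: add.assoc)
qed

lemma dsum_shift2:
  fixes f :: "nat \<Rightarrow> nat \<Rightarrow> 'a::comm_monoid_add"
  shows "(\<Sum>i\<le>n+2. \<Sum>j\<le>n+2. f i j) =
     (\<Sum>i\<le>n. \<Sum>j\<le>n. f (i+1) (j+1)) + (\<Sum>j\<le>n+2. f 0 j + f (n+2) j)
      + (\<Sum>i\<le>n. f (i+1) 0 + f (i+1) (n+2))"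
  by (simp only: sum_shift2 sum.distrib add_ac)

definition D1 :: "nat \<Rightarrow> int" where
  "D1 n = (\<Sum>i\<le>n. \<Sum>j\<le>n. int (min i j) * int (max i j) * (int (max i j) + 1))"
definition D2 :: "nat \<Rightarrow> int" where
  "D2 n = (\<Sum>i\<le>n. \<Sum>j\<le>n. (if n < i + j then int (min i j) * (int i + int j - int n) * (int n - int (max i j)) else 0))"
definition D3 :: "nat \<Rightarrow> int" where
  "D3 n = (\<Sum>i\<le>n. \<Sum>j\<le>n. (if n < i + j then (int i + int j - int n) * (int (min i j) + int n - int (max i j) + 1) else 0))"
definition E3 :: "nat \<Rightarrow> int" where
  "E3 n = (\<Sum>i\<le>n. \<Sum>j\<le>n. (if n < i + j then int i + int j - int n else 0))"

lemma gauss2: "2 * (\<Sum>i\<le>n. int i) = int n * (int n + 1)"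
  by (induction n) (auto simp: algebra_simps)

lemma sq_sum: "3 * (\<Sum>i\<le>n. int i * (int i + 1)) = int n * (int n + 1) * (int n + 2)"
  by (induction n) (auto simp: algebra_simps)

lemma E3_closed: "6 * E3 n = int n * (int n + 1) * (int n + 2)"
proof (induction n rule: nat_induct2')
  case 1 then show ?case by (simp add: E3_def)
next
  case 2 then show ?case by (simp add: E3_def)
next
  case (3 n)
  have a: "(\<Sum>i\<le>n. \<Sum>j\<le>n. (if n+2 < (i+1) + (j+1) then int (i+1) + int (j+1) - int (n+2) else 0)) = E3 n"
    unfolding E3_def by (intro sum.cong refl) auto
  have b: "(\<Sum>j\<le>n+2. (if n+2 < 0 + j then int 0 + int j - int (n+2) else 0) + (if n+2 < (n+2) + j then int (n+2) + int j - int (n+2) else 0)) = (\<Sum>j\<le>n+2. int j)"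
    by (intro sum.cong refl) auto
  have c: "(\<Sum>i\<le>n. (if n+2 < (i+1) + 0 then int (i+1) + int 0 - int (n+2) else 0) + (if n+2 < (i+1) + (n+2) then int (i+1) + int (n+2) - int (n+2) else 0)) = (\<Sum>i\<le>n. int i + 1)"
    by (intro sum.cong refl) auto
  have "E3 (n+2) = E3 n + (\<Sum>j\<le>n+2. int j) + (\<Sum>i\<le>n. int i + 1)"
    unfolding E3_def[of "n+2"] dsum_shift2 a b c by simp
  moreover have "2*(\<Sum>j\<le>n+2. int j) = int (n+2) * (int (n+2) + 1)" by (rule gauss2)
  moreover have "(\<Sum>i\<le>n. int i + 1) = (\<Sum>i\<le>n. int i) + int n + 1" by (simp add: sum.distrib)
  moreover note gauss2[of n]
  ultimately show ?case using 3 by (simp add: algebra_simps)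
qed

lemma D3_closed: "16 * D3 n = 2 * int n^4 + 8 * int n^3 + 12 * int n^2 + 8 * int n + 1 - (-1)^n"
proof (induction n rule: nat_induct2')
  case 1 then show ?case by (simp add: D3_def)
next
  case 2 then show ?case by (simp add: D3_def)
next
  case (3 n)
  have a: "(\<Sum>i\<le>n. \<Sum>j\<le>n. (if n+2 < (i+1) + (j+1) then (int (i+1) + int (j+1) - int (n+2)) * (int (min (i+1) (j+1)) + int (n+2) - int (max (i+1) (j+1)) + 1) else 0))
     = (\<Sum>i\<le>n. \<Sum>j\<le>n. (if n < i + j then (int i + int j - int n) * (int (min i j) + int n - int (max i j) + 1) else 0) + 2 * (if n < i + j then int i + int j - int n else 0))"
    by (intro sum.cong refl) (auto simp: algebra_simps)
  have a2: "\<dots> = D3 n + 2 * E3 n"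
    unfolding D3_def E3_def by (simp add: sum.distrib sum_distrib_left)
  have b: "(\<Sum>j\<le>n+2. (if n+2 < 0 + j then (int 0 + int j - int (n+2)) * (int (min 0 j) + int (n+2) - int (max 0 j) + 1) else 0)
     + (if n+2 < (n+2) + j then (int (n+2) + int j - int (n+2)) * (int (min (n+2) j) + int (n+2) - int (max (n+2) j) + 1) else 0))
     = (\<Sum>j\<le>n+2. int j * (int j + 1))"
    by (intro sum.cong refl) (auto simp: min_def max_def)
  have c: "(\<Sum>i\<le>n. (if n+2 < (i+1) + 0 then (int (i+1) + int 0 - int (n+2)) * (int (min (i+1) 0) + int (n+2) - int (max (i+1) 0) + 1) else 0)
     + (if n+2 < (i+1) + (n+2) then (int (i+1) + int (n+2) - int (n+2)) * (int (min (i+1) (n+2)) + int (n+2) - int (max (i+1) (n+2)) + 1) else 0))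
     = (\<Sum>i\<le>n. int (i+1) * (int (i+1) + 1))"
    by (intro sum.cong refl) (auto simp: min_def max_def algebra_simps)
  have c2: "(\<Sum>i\<le>n. int (i+1) * (int (i+1) + 1)) = (\<Sum>i\<le>n+1. int i * (int i + 1))"
    by (simp only: Suc_eq_plus1[symmetric] sum.atMost_Suc_shift)
  have "D3 (n+2) = D3 n + 2 * E3 n + (\<Sum>j\<le>n+2. int j * (int j + 1)) + (\<Sum>i\<le>n+1. int i * (int i + 1))"
    unfolding D3_def[of "n+2"] dsum_shift2 a a2 b c c2 by simp
  moreover note sq_sum[of "n+2"] sq_sum[of "n+1"] E3_closed[of n]
  ultimately show ?case using 3 by (simp add: algebra_simps eval_nat_numeral)
qed

lemma D2_closed: "480 * D2 n = 6 * int n^5 - 20 * int n^3 - int n - 15 * (-1)^n * int n"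
proof (induction n rule: nat_induct2')
  case 1 then show ?case by (simp add: D2_def)
next
  case 2 then show ?case by (simp add: D2_def)
next
  case (3 n)
  have a: "(\<Sum>i\<le>n. \<Sum>j\<le>n. (if n+2 < (i+1) + (j+1) then int (min (i+1) (j+1)) * (int (i+1) + int (j+1) - int (n+2)) * (int (n+2) - int (max (i+1) (j+1))) else 0))
     = (\<Sum>i\<le>n. \<Sum>j\<le>n. (if n < i + j then int (min i j) * (int i + int j - int n) * (int n - int (max i j)) else 0) + (if n < i + j then (int i + int j - int n) * (int (min i j) + int n - int (max i j) + 1) else 0))"
    by (intro sum.cong refl) (auto simp: algebra_simps)
  have a2: "\<dots> = D2 n + D3 n"
    unfolding D2_def D3_def by (simp add: sum.distrib)
  have b: "(\<Sum>j\<le>n+2. (if n+2 < 0 + j then int (min 0 j) * (int 0 + int j - int (n+2)) * (int (n+2) - int (max 0 j)) else 0)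
     + (if n+2 < (n+2) + j then int (min (n+2) j) * (int (n+2) + int j - int (n+2)) * (int (n+2) - int (max (n+2) j)) else 0)) = 0"
    by (intro sum.neutral) (auto simp: min_def max_def)
  have c: "(\<Sum>i\<le>n. (if n+2 < (i+1) + 0 then int (min (i+1) 0) * (int (i+1) + int 0 - int (n+2)) * (int (n+2) - int (max (i+1) 0)) else 0)
     + (if n+2 < (i+1) + (n+2) then int (min (i+1) (n+2)) * (int (i+1) + int (n+2) - int (n+2)) * (int (n+2) - int (max (i+1) (n+2))) else 0)) = 0"
    by (intro sum.neutral) (auto simp: min_def max_def)
  have "D2 (n+2) = D2 n + D3 n"
    unfolding D2_def[of "n+2"] dsum_shift2 a a2 b c by simp
  moreover note D3_closed[of n]
  ultimately show ?case using 3 by (simp add: algebra_simps eval_nat_numeral)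
qed

lemma D1_closed: "60 * D1 n = 12 * int n^5 + 45 * int n^4 + 50 * int n^3 + 15 * int n^2 - 2 * int n"
proof (induction n)
  case 0 then show ?case by (simp add: D1_def)
next
  case (Suc n)
  let ?f = "\<lambda>i j. int (min i j) * int (max i j) * (int (max i j) + 1)"
  have "D1 (Suc n) = (\<Sum>i\<le>n. \<Sum>j\<le>n. ?f i j) + (\<Sum>i\<le>n. ?f i (Suc n)) + (\<Sum>j\<le>n. ?f (Suc n) j) + ?f (Suc n) (Suc n)"
    unfolding D1_def by (simp add: sum.atMost_Suc sum.distrib)
  also have "(\<Sum>i\<le>n. ?f i (Suc n)) = (\<Sum>i\<le>n. int i) * ((int n + 1) * (int n + 2))"
    by (subst sum_distrib_right) (intro sum.cong refl, auto simp: min_def max_def algebra_simps)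
  also have "(\<Sum>j\<le>n. ?f (Suc n) j) = (\<Sum>i\<le>n. int i) * ((int n + 1) * (int n + 2))"
    by (subst sum_distrib_right) (intro sum.cong refl, auto simp: min_def max_def algebra_simps)
  finally have "D1 (Suc n) = D1 n + 2 * (\<Sum>i\<le>n. int i) * ((int n + 1) * (int n + 2)) + (int n + 1) * (int n + 1) * (int n + 2)"
    unfolding D1_def by (simp add: algebra_simps)
  then show ?case using Suc gauss2[of n] by (simp add: algebra_simps eval_nat_numeral)
qed

definition S3 :: "nat \<Rightarrow> (nat \<Rightarrow> nat \<Rightarrow> nat \<Rightarrow> int) \<Rightarrow> bool" where
  "S3 n C \<longleftrightarrow> (\<forall>i\<le>n. \<forall>j\<le>n. \<forall>k\<in>{1..n}. step_ok n i j (C i j k - C i j (k - 1)))"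

definition tA :: "(nat \<Rightarrow> nat \<Rightarrow> nat \<Rightarrow> int) \<Rightarrow> (nat \<Rightarrow> nat \<Rightarrow> nat \<Rightarrow> int)" where
  "tA C = (\<lambda>a b c. C a c b)"
definition tB :: "(nat \<Rightarrow> nat \<Rightarrow> nat \<Rightarrow> int) \<Rightarrow> (nat \<Rightarrow> nat \<Rightarrow> nat \<Rightarrow> int)" where
  "tB C = (\<lambda>a b c. C c a b)"

definition Zo :: "nat \<Rightarrow> (nat \<Rightarrow> nat \<Rightarrow> nat \<Rightarrow> int) \<Rightarrow> bool" where
  "Zo n C \<longleftrightarrow> (\<forall>i j k. (n < i \<or> n < j \<or> n < k) \<longrightarrow> C i j k = 0)"
definition Bd :: "nat \<Rightarrow> (nat \<Rightarrow> nat \<Rightarrow> nat \<Rightarrow> int) \<Rightarrow> bool" where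
  "Bd n C \<longleftrightarrow> (\<forall>i\<le>n. \<forall>j\<le>n. C i j 0 = 0 \<and> C i 0 j = 0 \<and> C 0 i j = 0) \<and>
     (\<forall>i\<le>n. \<forall>j\<le>n. C i j n = int (i * j) \<and> C i n j = int (i * j) \<and> C n i j = int (i * j))"

lemma aux_split3:
  "(\<forall>i\<le>n. \<forall>j\<le>n. \<forall>k\<in>{1..n}. P i j k \<and> Q i j k \<and> R i j k) \<longleftrightarrow>
   (\<forall>i\<le>n. \<forall>j\<le>n. \<forall>k\<in>{1..n}. P i j k) \<and> (\<forall>i\<le>n. \<forall>j\<le>n. \<forall>k\<in>{1..n}. Q i j k) \<and> (\<forall>i\<le>n. \<forall>j\<le>n. \<forall>k\<in>{1..n}. R i j k)"
  by blast

lemma corner_sum_alt: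
  "corner_sum n C \<longleftrightarrow> Zo n C \<and> Bd n C \<and> S3 n C \<and> S3 n (tA C) \<and> S3 n (tB C)"
  unfolding corner_sum_def aux_split3 Zo_def Bd_def S3_def tA_def tB_def by (simp only: conj_assoc)

abbreviation LL :: "nat \<Rightarrow> nat \<Rightarrow> nat \<Rightarrow> int" where
  "LL n i j \<equiv> max 0 (int i + int j - int n)"

lemma tele_lower:
  assumes "S3 n C" "\<forall>i\<le>n. \<forall>j\<le>n. C i j 0 = 0" "i \<le> n" "j \<le> n" "k \<le> n"
  shows "int k * LL n i j \<le> C i j k"
  using assms(5)
proof (induction k)
  case 0 then show ?case using assms by simp
next
  case (Suc k)
  have "step_ok n i j (C i j (Suc k) - C i j k)"
    using assms(1,3,4) Suc.prems unfolding S3_def by (metis atLeastAtMost_iff diff_Suc_1 le_add1 plus_1_eq_Suc)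
  then have "LL n i j \<le> C i j (Suc k) - C i j k" unfolding step_ok_def by simp
  then show ?case using Suc by (simp add: algebra_simps)
qed

lemma tele_lower3:
  assumes "corner_sum n C" "i \<le> n" "j \<le> n" "k \<le> n"
  shows "int k * LL n i j \<le> C i j k" "int j * LL n i k \<le> C i j k" "int i * LL n j k \<le> C i j k"
proof -
  have *: "S3 n C" "S3 n (tA C)" "S3 n (tB C)" and b: "Bd n C" using assms(1) corner_sum_alt by auto
  show "int k * LL n i j \<le> C i j k" using tele_lower[OF *(1)] b assms unfolding Bd_def by auto
  show "int j * LL n i k \<le> C i j k" using tele_lower[OF *(2), of i k j] b assms unfolding Bd_def tA_def by auto
  show "int i * LL n j k \<le> C i j k" using tele_lower[OF *(3), of j k i] b assms unfolding Bd_def tB_def by auto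
qed

definition cmin :: "nat \<Rightarrow> nat \<Rightarrow> nat \<Rightarrow> nat \<Rightarrow> int" where
  "cmin n i j k = (if i \<le> n \<and> j \<le> n \<and> k \<le> n then
      int (min i (min j k)) * max 0 (int i + int j + int k - int (min i (min j k)) - int n) else 0)"

lemma cmin_sym1: "cmin n i j k = cmin n j i k"
  unfolding cmin_def by (simp add: min.left_commute algebra_simps conj_commute conj_left_commute)
lemma cmin_sym2: "cmin n i j k = cmin n i k j"
  unfolding cmin_def by (simp add: min.commute algebra_simps conj_commute conj_left_commute)

lemma cmin_le:
  assumes "i \<le> j" "j \<le> n" "k \<le> n"
  shows "cmin n i j k = (if k \<le> i then int k * LL n i j else int i * max 0 (int j + int k - int n))"
proof -
  have m: "min i (min j k) = (if k \<le> i then k else i)" using assms by auto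
  show ?thesis using assms unfolding cmin_def m by (auto simp: algebra_simps)
qed

lemma step_cmin_aux:
  assumes "i \<le> j" "j \<le> n" "1 \<le> k" "k \<le> n"
  shows "step_ok n i j (cmin n i j k - cmin n i j (k - 1))"
proof -
  have e1: "cmin n i j k = (if k \<le> i then int k * LL n i j else int i * max 0 (int j + int k - int n))"
    using cmin_le assms by simp
  have e2: "cmin n i j (k-1) = (if k - 1 \<le> i then int (k-1) * LL n i j else int i * max 0 (int j + int (k-1) - int n))"
    using cmin_le assms by simp
  consider "k \<le> i" | "k = i + 1" | "i + 2 \<le> k" by linarith
  then show ?thesis
  proof cases
    case 1
    then have "cmin n i j k - cmin n i j (k - 1) = LL n i j"
      unfolding e1 e2 using assms by (simp add: of_nat_diff algebra_simps)
    then show ?thesis unfolding step_ok_def using assms by (auto simp: min_def)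
  next
    case 2
    then have "cmin n i j k - cmin n i j (k - 1) = int i * max 0 (int j + int i + 1 - int n) - int i * LL n i j"
      unfolding e1 e2 using assms by (simp add: algebra_simps)
    also have "\<dots> = (if n \<le> i + j then int i else 0)"
      by (auto simp: algebra_simps max_def)
    finally show ?thesis unfolding step_ok_def using assms by auto
  next
    case 3
    then have "cmin n i j k - cmin n i j (k - 1) = int i * max 0 (int j + int k - int n) - int i * max 0 (int j + int k - 1 - int n)"
      unfolding e1 e2 using assms by (simp add: of_nat_diff algebra_simps)
    also have "\<dots> = (if n < j + k then int i else 0)"
      by (auto simp: algebra_simps max_def)
    finally show ?thesis unfolding step_ok_def using assms 3 by auto
  qed
qed

lemma step_cmin:
  assumes "i \<le> n" "j \<le> n" "1 \<le> k" "k \<le> n"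
  shows "step_ok n i j (cmin n i j k - cmin n i j (k - 1))"
proof (cases "i \<le> j")
  case True then show ?thesis using step_cmin_aux assms by simp
next
  case False
  have "step_ok n j i (cmin n j i k - cmin n j i (k - 1))" using step_cmin_aux[of j i n k] False assms by simp
  then show ?thesis unfolding step_ok_def by (simp add: cmin_sym1[of n j i] ac_simps)
qed

lemma tA_cmin: "tA (cmin n) = cmin n"
  unfolding tA_def by (intro ext) (rule cmin_sym2[symmetric])
lemma tB_cmin: "tB (cmin n) = cmin n"
  unfolding tB_def by (intro ext) (metis cmin_sym1 cmin_sym2)

lemma cmin_cs: "corner_sum n (cmin n)"
proof -
  have "S3 n (cmin n)" unfolding S3_def using step_cmin by auto
  moreover have "Zo n (cmin n)" unfolding Zo_def cmin_def by auto
  moreover have "Bd n (cmin n)"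
  proof -
    have "cmin n i j n = int (i*j)" if "i \<le> n" "j \<le> n" for i j
      using that unfolding cmin_def by (auto simp: min_def max_def)
    moreover have "cmin n i j 0 = 0" for i j unfolding cmin_def by auto
    ultimately show ?thesis unfolding Bd_def by (metis cmin_sym1 cmin_sym2)
  qed
  ultimately show ?thesis unfolding corner_sum_alt tA_cmin tB_cmin by simp
qed

definition dual :: "nat \<Rightarrow> (nat \<Rightarrow> nat \<Rightarrow> nat \<Rightarrow> int) \<Rightarrow> (nat \<Rightarrow> nat \<Rightarrow> nat \<Rightarrow> int)" where
  "dual n C = (\<lambda>i j k. if i \<le> n \<and> j \<le> n \<and> k \<le> n then int (i * j) - C i j (n - k) else 0)"

lemma step_ok_flip:
  assumes "step_ok n i (n - j) d" "j \<le> n" "i \<le> n"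
  shows "step_ok n i j (int i - d)"
  using assms unfolding step_ok_def by (auto simp: of_nat_diff)

lemma dual_cs:
  assumes "corner_sum n C"
  shows "corner_sum n (dual n C)"
proof -
  have Z: "\<forall>i j k. (n < i \<or> n < j \<or> n < k) \<longrightarrow> C i j k = 0"
   and B0: "\<forall>i\<le>n. \<forall>j\<le>n. C i j 0 = 0 \<and> C i 0 j = 0 \<and> C 0 i j = 0"
   and Bn: "\<forall>i\<le>n. \<forall>j\<le>n. C i j n = int (i * j) \<and> C i n j = int (i * j) \<and> C n i j = int (i * j)"
   and St: "\<forall>i\<le>n. \<forall>j\<le>n. \<forall>k\<in>{1..n}.
        step_ok n i j (C i j k - C i j (k - 1)) \<and>
        step_ok n i j (C i k j - C i (k - 1) j) \<and>
        step_ok n i j (C k i j - C (k - 1) i j)"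
    using assms unfolding corner_sum_def by blast+
  show ?thesis unfolding corner_sum_def
  proof (intro conjI allI impI ballI)
    fix i j k assume "n < i \<or> n < j \<or> n < k"
    then show "dual n C i j k = 0" unfolding dual_def by auto
  next
    fix i j assume ij: "i \<le> n" "j \<le> n"
    show "dual n C i j 0 = 0" "dual n C i 0 j = 0" "dual n C 0 i j = 0"
      using ij Bn B0 unfolding dual_def by auto
    show "dual n C i j n = int (i * j)" "dual n C i n j = int (i * j)" "dual n C n i j = int (i * j)"
      using ij Bn B0 unfolding dual_def by (auto simp: of_nat_diff algebra_simps)
  next
    fix i j k assume ij: "i \<le> n" "j \<le> n" and k: "k \<in> {1..n}"
    have k': "n - (k - 1) = (n - k) + 1" "n - k + 1 \<in> {1..n}" "n - k \<le> n" "k - 1 \<le> n" using k by auto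
    have s1: "step_ok n i j (C i j (n - k + 1) - C i j (n - k))" using St ij k' by (metis add_diff_cancel_right')
    show "step_ok n i j (dual n C i j k - dual n C i j (k - 1))"
      using s1 ij k k' unfolding dual_def by (simp add: algebra_simps)
    have nj: "n - j \<le> n" by simp
    have s2: "step_ok n i (n - j) (C i k (n - j) - C i (k - 1) (n - j))" using St ij k nj by blast
    have e2: "dual n C i k j - dual n C i (k - 1) j = int i - (C i k (n - j) - C i (k - 1) (n - j))"
      using ij k unfolding dual_def by (auto simp: of_nat_diff algebra_simps)
    show "step_ok n i j (dual n C i k j - dual n C i (k - 1) j)"
      unfolding e2 by (rule step_ok_flip[OF s2 ij(2,1)])
    have s3: "step_ok n i (n - j) (C k i (n - j) - C (k - 1) i (n - j))" using St ij k nj by blast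
    have e3: "dual n C k i j - dual n C (k - 1) i j = int i - (C k i (n - j) - C (k - 1) i (n - j))"
      using ij k unfolding dual_def by (auto simp: of_nat_diff algebra_simps)
    show "step_ok n i j (dual n C k i j - dual n C (k - 1) i j)"
      unfolding e3 by (rule step_ok_flip[OF s3 ij(2,1)])
  qed
qed

lemma cmin_lower:
  assumes "corner_sum n C" "i \<le> n" "j \<le> n" "k \<le> n"
  shows "cmin n i j k \<le> C i j k"
proof -
  note t = tele_lower3[OF assms]
  consider "min i (min j k) = k" | "min i (min j k) = i" | "min i (min j k) = j" by linarith
  then show ?thesis
  proof cases
    case 1 then have "cmin n i j k = int k * LL n i j" using assms unfolding cmin_def by simp
    then show ?thesis using t by simp
  next
    case 2 then have "cmin n i j k = int i * LL n j k" using assms unfolding cmin_def by (simp add: algebra_simps)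
    then show ?thesis using t by simp
  next
    case 3 then have "cmin n i j k = int j * LL n i k" using assms unfolding cmin_def by (simp add: algebra_simps)
    then show ?thesis using t by simp
  qed
qed

definition cmax :: "nat \<Rightarrow> nat \<Rightarrow> nat \<Rightarrow> nat \<Rightarrow> int" where
  "cmax n = dual n (cmin n)"

lemma cmax_cs: "corner_sum n (cmax n)"
  unfolding cmax_def by (rule dual_cs[OF cmin_cs])

lemma cmax_upper:
  assumes "corner_sum n C" "i \<le> n" "j \<le> n" "k \<le> n"
  shows "C i j k \<le> cmax n i j k"
proof -
  have "cmin n i j (n - k) \<le> dual n C i j (n - k)"
    using cmin_lower[OF dual_cs[OF assms(1)]] assms by simp
  then show ?thesis using assms unfolding cmax_def dual_def by auto
qed

definition upd :: "(nat \<Rightarrow> nat \<Rightarrow> nat \<Rightarrow> int) \<Rightarrow> nat \<Rightarrow> nat \<Rightarrow> nat \<Rightarrow> (nat \<Rightarrow> nat \<Rightarrow> nat \<Rightarrow> int)" where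
  "upd C a b c = (\<lambda>i j k. if i = a \<and> j = b \<and> k = c then C i j k - 1 else C i j k)"

definition Phi :: "nat \<Rightarrow> (nat \<Rightarrow> nat \<Rightarrow> nat \<Rightarrow> int) \<Rightarrow> nat \<Rightarrow> nat \<Rightarrow> nat \<Rightarrow> int" where
  "Phi n C i j k = int n * C i j k - int i * int j * int k"

lemma low_strict:
  assumes "0 < a" "a < n" "0 < b" "b < n"
  shows "int n * LL n a b < int a * int b"
proof (cases "a + b \<le> n")
  case True then show ?thesis using assms by simp
next
  case False
  have "0 < (int n - int a) * (int n - int b)" using assms by (simp add: mult_pos_pos)
  then show ?thesis using False by (simp add: algebra_simps max_def)
qed

lemma up_strict:
  assumes "0 < a" "a < n" "0 < b" "b < n"
  shows "int a * int b < int n * int (min a b)"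
proof (cases "a \<le> b")
  case True
  have "0 < int a * (int n - int b)" using assms by (simp add: mult_pos_pos)
  then show ?thesis using True by (simp add: algebra_simps min_def)
next
  case False
  have "0 < int b * (int n - int a)" using assms by (simp add: mult_pos_pos)
  then show ?thesis using False by (simp add: algebra_simps min_def)
qed

lemma dec_S3:
  assumes SC: "S3 n C" and SD: "S3 n D"
    and le: "\<forall>i\<le>n. \<forall>j\<le>n. \<forall>k\<le>n. D i j k \<le> C i j k"
    and p: "0 < a" "a < n" "0 < b" "b < n" "0 < c" "c < n"
    and gap: "D a b c < C a b c"
    and mx: "\<forall>i\<le>n. \<forall>j\<le>n. \<forall>k\<le>n. D i j k < C i j k \<longrightarrow> Phi n C i j k \<le> Phi n C a b c"
  shows "S3 n (upd C a b c)"
  unfolding S3_def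
proof (intro allI impI ballI)
  fix i j k assume ij: "i \<le> n" "j \<le> n" and k: "k \<in> {1..n}"
  have sc: "step_ok n i j (C i j k - C i j (k - 1))" and sd: "step_ok n i j (D i j k - D i j (k - 1))"
    using SC SD ij k unfolding S3_def by auto
  consider "i = a \<and> j = b \<and> k = c" | "i = a \<and> j = b \<and> k - 1 = c" | "\<not> (i = a \<and> j = b \<and> k = c)" "\<not> (i = a \<and> j = b \<and> k - 1 = c)"
    by blast
  then show "step_ok n i j (upd C a b c i j k - upd C a b c i j (k - 1))"
  proof cases
    case 1
    then have e: "upd C a b c i j k - upd C a b c i j (k - 1) = C a b c - C a b (c - 1) - 1"
      using k unfolding upd_def by auto
    have "LL n a b < C a b c - C a b (c - 1)"
    proof (rule ccontr)
      assume "\<not> ?thesis"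
      then have eq: "C a b c - C a b (c - 1) = LL n a b" using sc 1 unfolding step_ok_def by auto
      have "LL n a b \<le> D a b c - D a b (c - 1)" using sd 1 unfolding step_ok_def by auto
      then have "D a b (c - 1) < C a b (c - 1)" using eq gap by linarith
      then have "Phi n C a b (c - 1) \<le> Phi n C a b c" using mx p by auto
      moreover have "Phi n C a b (c - 1) = Phi n C a b c - int n * LL n a b + int a * int b"
        unfolding Phi_def using eq p by (simp add: of_nat_diff algebra_simps)
      ultimately show False using low_strict[OF p(1-4)] by linarith
    qed
    then show ?thesis unfolding e using sc 1 unfolding step_ok_def by auto
  next
    case 2
    then have kc: "k = c + 1" using k by auto
    then have e: "upd C a b c i j k - upd C a b c i j (k - 1) = C a b (c + 1) - C a b c + 1"
      using 2 unfolding upd_def by auto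
    have "C a b (c + 1) - C a b c < int (min a b)"
    proof (rule ccontr)
      assume "\<not> ?thesis"
      then have eq: "C a b (c + 1) - C a b c = int (min a b)" using sc 2 kc unfolding step_ok_def by auto
      have "D a b (c + 1) - D a b c \<le> int (min a b)" using sd 2 kc unfolding step_ok_def by auto
      then have "D a b (c + 1) < C a b (c + 1)" using eq gap by linarith
      then have "Phi n C a b (c + 1) \<le> Phi n C a b c" using mx p by auto
      moreover have "Phi n C a b (c + 1) = Phi n C a b c + int n * int (min a b) - int a * int b"
        unfolding Phi_def using eq p by (simp add: algebra_simps)
      ultimately show False using up_strict[OF p(1-4)] by linarith
    qed
    then show ?thesis unfolding e using sc 2 kc unfolding step_ok_def by auto
  next
    case 3
    then have "upd C a b c i j k - upd C a b c i j (k - 1) = C i j k - C i j (k - 1)"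
      unfolding upd_def by auto
    then show ?thesis using sc by simp
  qed
qed

definition rho :: "nat \<Rightarrow> (nat \<Rightarrow> nat \<Rightarrow> nat \<Rightarrow> int) \<Rightarrow> int" where
  "rho n C = (\<Sum>i\<le>n. \<Sum>j\<le>n. \<Sum>k\<le>n. C i j k)"

lemma rho_upd:
  assumes "a \<le> n" "b \<le> n" "c \<le> n"
  shows "rho n (upd C a b c) = rho n C - 1"
proof -
  have "upd C a b c = (\<lambda>i j k. C i j k - (if i = a then if j = b then if k = c then 1 else 0 else 0 else 0))"
    unfolding upd_def by (intro ext) auto
  then have "rho n (upd C a b c) = rho n C - (\<Sum>i\<le>n. \<Sum>j\<le>n. \<Sum>k\<le>n. (if i = a then if j = b then if k = c then 1 else 0 else 0 else 0))"
    unfolding rho_def by (simp add: sum_subtractf)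
  also have "(\<Sum>i\<le>n. \<Sum>j\<le>n. \<Sum>k\<le>n. (if i = a then if j = b then if k = c then 1 else 0 else 0 else 0)) = (1::int)"
  proof -
    have "(\<Sum>k\<le>n. (if i = a then if j = b then if k = c then 1 else 0 else 0 else 0)) = (if i = a then if j = b then 1 else 0 else (0::int))" for i j
      using assms by auto
    then have "(\<Sum>i\<le>n. \<Sum>j\<le>n. \<Sum>k\<le>n. (if i = a then if j = b then if k = c then 1 else 0 else 0 else 0)) = (\<Sum>i\<le>n. \<Sum>j\<le>n. (if i = a then if j = b then 1 else 0 else (0::int)))"
      by simp
    also have "\<dots> = (\<Sum>i\<le>n. (if i = a then 1 else (0::int)))"
    proof (rule sum.cong[OF refl])
      fix i show "(\<Sum>j\<le>n. (if i = a then if j = b then 1 else 0 else (0::int))) = (if i = a then 1 else 0)"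
        using assms by auto
    qed
    also have "\<dots> = 1" using assms by auto
    finally show ?thesis .
  qed
  finally show ?thesis .
qed

lemma CS_iff: "C \<in> CS n \<longleftrightarrow> corner_sum n C" unfolding CS_def by simp

lemma cs_zero: "corner_sum n C \<Longrightarrow> (n < i \<or> n < j \<or> n < k) \<Longrightarrow> C i j k = 0"
  unfolding corner_sum_def by blast

lemma cs_eqI:
  assumes "corner_sum n C" "corner_sum n D" "\<forall>i\<le>n. \<forall>j\<le>n. \<forall>k\<le>n. C i j k = D i j k"
  shows "C = D"
proof (intro ext)
  fix i j k show "C i j k = D i j k"
  proof (cases "i \<le> n \<and> j \<le> n \<and> k \<le> n")
    case True then show ?thesis using assms(3) by blast
  next
    case False then show ?thesis using cs_zero[OF assms(1), of i j k] cs_zero[OF assms(2), of i j k] by linarith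
  qed
qed

lemma unit_step:
  assumes C: "corner_sum n C" and D: "corner_sum n D" and le: "prec n C D" and ne: "C \<noteq> D"
  shows "\<exists>E. corner_sum n E \<and> prec n C E \<and> prec n E D \<and> rho n E = rho n C - 1"
proof -
  have le': "\<forall>i\<le>n. \<forall>j\<le>n. \<forall>k\<le>n. D i j k \<le> C i j k" using le unfolding prec_def by blast
  define G where "G = {(i, j, k). i \<le> n \<and> j \<le> n \<and> k \<le> n \<and> D i j k < C i j k}"
  have fin: "finite G"
    by (rule finite_subset[of _ "{..n} \<times> {..n} \<times> {..n}"]) (auto simp: G_def)
  have "G \<noteq> {}"
  proof -
    have "\<not> (\<forall>i\<le>n. \<forall>j\<le>n. \<forall>k\<le>n. C i j k = D i j k)" using cs_eqI[OF C D] ne by blast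
    then obtain i j k where "i \<le> n" "j \<le> n" "k \<le> n" "C i j k \<noteq> D i j k" by blast
    moreover then have "D i j k \<le> C i j k" using le' by blast
    ultimately have "(i, j, k) \<in> G" unfolding G_def by auto
    then show ?thesis by blast
  qed
  define f where "f = (\<lambda>(i, j, k). Phi n C i j k)"
  define M where "M = Max (f ` G)"
  have "M \<in> f ` G" unfolding M_def using fin \<open>G \<noteq> {}\<close> by (intro Max_in) auto
  then obtain a b c where abc: "(a, b, c) \<in> G" "f (a, b, c) = M" by auto
  have mxG: "f q \<le> M" if "q \<in> G" for q unfolding M_def using fin that by (intro Max_ge) auto
  have mx: "\<forall>i\<le>n. \<forall>j\<le>n. \<forall>k\<le>n. D i j k < C i j k \<longrightarrow> Phi n C i j k \<le> Phi n C a b c"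
  proof (intro allI impI)
    fix i j k assume "i \<le> n" "j \<le> n" "k \<le> n" "D i j k < C i j k"
    then have "(i, j, k) \<in> G" unfolding G_def by auto
    then have "f (i, j, k) \<le> f (a, b, c)" using mxG abc(2) by simp
    then show "Phi n C i j k \<le> Phi n C a b c" unfolding f_def by simp
  qed
  have rng: "a \<le> n" "b \<le> n" "c \<le> n" and gap: "D a b c < C a b c" using abc unfolding G_def by auto
  have BC: "Bd n C" and BD: "Bd n D" using C D corner_sum_alt by auto
  have p: "0 < a" "a < n" "0 < b" "b < n" "0 < c" "c < n"
  proof -
    have B0C: "\<And>i j. i \<le> n \<Longrightarrow> j \<le> n \<Longrightarrow> C i j 0 = 0 \<and> C i 0 j = 0 \<and> C 0 i j = 0"
      and BnC: "\<And>i j. i \<le> n \<Longrightarrow> j \<le> n \<Longrightarrow> C i j n = int (i * j) \<and> C i n j = int (i * j) \<and> C n i j = int (i * j)"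
      using BC unfolding Bd_def by blast+
    have B0D: "\<And>i j. i \<le> n \<Longrightarrow> j \<le> n \<Longrightarrow> D i j 0 = 0 \<and> D i 0 j = 0 \<and> D 0 i j = 0"
      and BnD: "\<And>i j. i \<le> n \<Longrightarrow> j \<le> n \<Longrightarrow> D i j n = int (i * j) \<and> D i n j = int (i * j) \<and> D n i j = int (i * j)"
      using BD unfolding Bd_def by blast+
    show "0 < a" proof (rule ccontr) assume "\<not> 0 < a" then have "a = 0" by simp
      then show False using B0C[of b c] B0D[of b c] rng gap by simp qed
    show "0 < b" proof (rule ccontr) assume "\<not> 0 < b" then have "b = 0" by simp
      then show False using B0C[of a c] B0D[of a c] rng gap by simp qed
    show "0 < c" proof (rule ccontr) assume "\<not> 0 < c" then have "c = 0" by simp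
      then show False using B0C[of a b] B0D[of a b] rng gap by simp qed
    show "a < n" proof (rule ccontr) assume "\<not> a < n" then have "a = n" using rng by simp
      then show False using BnC[of b c] BnD[of b c] rng gap by simp qed
    show "b < n" proof (rule ccontr) assume "\<not> b < n" then have "b = n" using rng by simp
      then show False using BnC[of a c] BnD[of a c] rng gap by simp qed
    show "c < n" proof (rule ccontr) assume "\<not> c < n" then have "c = n" using rng by simp
      then show False using BnC[of a b] BnD[of a b] rng gap by simp qed
  qed
  define E where "E = upd C a b c"
  have SC: "S3 n C" "S3 n (tA C)" "S3 n (tB C)" and SD: "S3 n D" "S3 n (tA D)" "S3 n (tB D)"
    using C D corner_sum_alt by auto
  have s1: "S3 n E" unfolding E_def by (rule dec_S3[OF SC(1) SD(1) le' p gap mx])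
  have tAE: "tA E = upd (tA C) a c b" unfolding E_def tA_def upd_def by (intro ext) auto
  have tBE: "tB E = upd (tB C) b c a" unfolding E_def tB_def upd_def by (intro ext) auto
  have s2: "S3 n (tA E)" unfolding tAE
  proof (rule dec_S3[OF SC(2) SD(2) _ p(1,2) p(5,6) p(3,4)])
    show "\<forall>i\<le>n. \<forall>j\<le>n. \<forall>k\<le>n. tA D i j k \<le> tA C i j k" using le' unfolding tA_def by auto
    show "tA D a c b < tA C a c b" using gap unfolding tA_def by auto
    show "\<forall>i\<le>n. \<forall>j\<le>n. \<forall>k\<le>n. tA D i j k < tA C i j k \<longrightarrow> Phi n (tA C) i j k \<le> Phi n (tA C) a c b"
    proof (intro allI impI)
      fix i j k assume h: "i \<le> n" "j \<le> n" "k \<le> n" "tA D i j k < tA C i j k"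
      then have "Phi n C i k j \<le> Phi n C a b c" using mx unfolding tA_def by auto
      moreover have "Phi n (tA C) i j k = Phi n C i k j" "Phi n (tA C) a c b = Phi n C a b c"
        unfolding Phi_def tA_def by (simp_all add: ac_simps)
      ultimately show "Phi n (tA C) i j k \<le> Phi n (tA C) a c b" by simp
    qed
  qed
  have s3: "S3 n (tB E)" unfolding tBE
  proof (rule dec_S3[OF SC(3) SD(3) _ p(3,4) p(5,6) p(1,2)])
    show "\<forall>i\<le>n. \<forall>j\<le>n. \<forall>k\<le>n. tB D i j k \<le> tB C i j k" using le' unfolding tB_def by auto
    show "tB D b c a < tB C b c a" using gap unfolding tB_def by auto
    show "\<forall>i\<le>n. \<forall>j\<le>n. \<forall>k\<le>n. tB D i j k < tB C i j k \<longrightarrow> Phi n (tB C) i j k \<le> Phi n (tB C) b c a"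
    proof (intro allI impI)
      fix i j k assume h: "i \<le> n" "j \<le> n" "k \<le> n" "tB D i j k < tB C i j k"
      then have "Phi n C k i j \<le> Phi n C a b c" using mx unfolding tB_def by auto
      moreover have "Phi n (tB C) i j k = Phi n C k i j" "Phi n (tB C) b c a = Phi n C a b c"
        unfolding Phi_def tB_def by (simp_all add: ac_simps)
      ultimately show "Phi n (tB C) i j k \<le> Phi n (tB C) b c a" by simp
    qed
  qed
  have zE: "Zo n E" unfolding Zo_def
  proof (intro allI impI)
    fix i j k assume h: "n < i \<or> n < j \<or> n < k"
    then have "E i j k = C i j k" unfolding E_def upd_def using rng by auto
    then show "E i j k = 0" using cs_zero[OF C h] by simp
  qed
  have bE: "Bd n E"
  proof -
    have "\<And>i j k. (i = 0 \<or> j = 0 \<or> k = 0 \<or> i = n \<or> j = n \<or> k = n) \<Longrightarrow> E i j k = C i j k"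
      unfolding E_def upd_def using p by auto
    then show ?thesis using BC unfolding Bd_def by simp
  qed
  have csE: "corner_sum n E" using zE bE s1 s2 s3 corner_sum_alt by blast
  have "prec n C E" unfolding prec_def E_def upd_def by auto
  moreover have "prec n E D" unfolding prec_def E_def upd_def using le' gap by auto
  moreover have "rho n E = rho n C - 1" unfolding E_def by (rule rho_upd[OF rng])
  ultimately show ?thesis using csE by blast
qed

lemma prec_trans: "prec n A B \<Longrightarrow> prec n B C \<Longrightarrow> prec n A C"
  unfolding prec_def by (meson order_trans)

lemma rho_mono: "prec n C D \<Longrightarrow> rho n D \<le> rho n C"
  unfolding rho_def prec_def by (intro sum_mono) auto

lemma rho_strict:
  assumes C: "corner_sum n C" and D: "corner_sum n D" and le: "prec n C D" and ne: "C \<noteq> D"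
  shows "rho n D < rho n C"
proof -
  have le': "\<And>i j k. i \<le> n \<Longrightarrow> j \<le> n \<Longrightarrow> k \<le> n \<Longrightarrow> D i j k \<le> C i j k" using le unfolding prec_def by blast
  have "\<not> (\<forall>i\<le>n. \<forall>j\<le>n. \<forall>k\<le>n. C i j k = D i j k)" using cs_eqI[OF C D] ne by blast
  then obtain a b c where abc: "a \<le> n" "b \<le> n" "c \<le> n" "C a b c \<noteq> D a b c" by blast
  then have lt: "D a b c < C a b c" using le' by force
  have "(\<Sum>k\<le>n. D a b k) < (\<Sum>k\<le>n. C a b k)"
    by (rule sum_strict_mono_ex1) (use le' abc lt in auto)
  then have "(\<Sum>j\<le>n. \<Sum>k\<le>n. D a j k) < (\<Sum>j\<le>n. \<Sum>k\<le>n. C a j k)"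
    by (intro sum_strict_mono_ex1) (use le' abc in \<open>auto intro!: sum_mono\<close>)
  then have "(\<Sum>i\<le>n. \<Sum>j\<le>n. \<Sum>k\<le>n. D i j k) < (\<Sum>i\<le>n. \<Sum>j\<le>n. \<Sum>k\<le>n. C i j k)"
    by (intro sum_strict_mono_ex1) (use le' abc in \<open>auto intro!: sum_mono\<close>)
  then show ?thesis unfolding rho_def .
qed

lemma rho_eq:
  assumes "corner_sum n C" "corner_sum n D" "prec n C D \<or> prec n D C" "rho n C = rho n D"
  shows "C = D"
  using assms rho_strict by (metis less_irrefl)

lemma CS_finite: "finite (CS n)"
proof -
  define A where "A = {..n} \<times> {..n} \<times> {..n}"
  define T where "T = (\<lambda>(i, j, k). {cmin n i j k..cmax n i j k})"
  define F where "F = (\<lambda>g i j k. if (i, j, k) \<in> A then g (i, j, k) else (0::int))"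
  have "CS n \<subseteq> F ` (PiE A T)"
  proof
    fix C assume "C \<in> CS n"
    then have C: "corner_sum n C" by (simp add: CS_iff)
    define g where "g = restrict (\<lambda>(i, j, k). C i j k) A"
    have "g \<in> PiE A T" unfolding g_def T_def A_def
      using cmin_lower[OF C] cmax_upper[OF C] by auto
    moreover have "C = F g"
    proof (intro ext)
      fix i j k show "C i j k = F g i j k"
        using cs_zero[OF C, of i j k] unfolding F_def g_def A_def by auto
    qed
    ultimately show "C \<in> F ` PiE A T" by blast
  qed
  moreover have "finite (PiE A T)" unfolding A_def T_def by (intro finite_PiE) auto
  ultimately show ?thesis using finite_subset by blast
qed

lemma graded:
  "graded_of_rank (CS n) (prec n) (nat (rho n (cmax n) - rho n (cmin n)))"
  unfolding graded_of_rank_def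
proof (intro conjI allI impI)
  show "finite (CS n)" by (rule CS_finite)
  show "CS n \<noteq> {}" using cmin_cs CS_iff by blast
  fix S assume mS: "is_maximal_chain (CS n) (prec n) S"
  have SC: "S \<subseteq> CS n" and cmp: "\<forall>x\<in>S. \<forall>y\<in>S. prec n x y \<or> prec n y x"
    and mxl: "\<And>T. is_chain (CS n) (prec n) T \<Longrightarrow> S \<subseteq> T \<Longrightarrow> T = S"
    using mS unfolding is_maximal_chain_def is_chain_def by blast+
  have csS: "\<And>x. x \<in> S \<Longrightarrow> corner_sum n x" using SC CS_iff by blast
  have top: "\<And>x. corner_sum n x \<Longrightarrow> prec n (cmax n) x" unfolding prec_def using cmax_upper by blast
  have bot: "\<And>x. corner_sum n x \<Longrightarrow> prec n x (cmin n)" unfolding prec_def using cmin_lower by blast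
  have finS: "finite S" using SC CS_finite finite_subset by blast
  have maxS: "cmax n \<in> S"
  proof -
    have r: "prec n (cmax n) (cmax n)" unfolding prec_def by simp
    have c1: "prec n (cmax n) x \<or> prec n x (cmax n)" if "x \<in> S" for x using top[OF csS[OF that]] by blast
    have "is_chain (CS n) (prec n) (insert (cmax n) S)"
      unfolding is_chain_def
    proof (intro conjI ballI)
      show "insert (cmax n) S \<subseteq> CS n" using SC cmax_cs CS_iff by blast
      fix x y assume xy: "x \<in> insert (cmax n) S" "y \<in> insert (cmax n) S"
      show "prec n x y \<or> prec n y x"
      proof (cases "x = cmax n")
        case True
        then show ?thesis using xy c1 r by (cases "y = cmax n") auto
      next
        case False
        then have "x \<in> S" using xy by simp
        then show ?thesis using xy c1 cmp by (cases "y = cmax n") auto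
      qed
    qed
    then have "insert (cmax n) S = S" by (rule mxl) blast
    then show ?thesis by blast
  qed
  have minS: "cmin n \<in> S"
  proof -
    have r: "prec n (cmin n) (cmin n)" unfolding prec_def by simp
    have c1: "prec n (cmin n) x \<or> prec n x (cmin n)" if "x \<in> S" for x using bot[OF csS[OF that]] by blast
    have "is_chain (CS n) (prec n) (insert (cmin n) S)"
      unfolding is_chain_def
    proof (intro conjI ballI)
      show "insert (cmin n) S \<subseteq> CS n" using SC cmin_cs CS_iff by blast
      fix x y assume xy: "x \<in> insert (cmin n) S" "y \<in> insert (cmin n) S"
      show "prec n x y \<or> prec n y x"
      proof (cases "x = cmin n")
        case True
        then show ?thesis using xy c1 r by (cases "y = cmin n") auto
      next
        case False
        then have "x \<in> S" using xy by simp
        then show ?thesis using xy c1 cmp by (cases "y = cmin n") auto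
      qed
    qed
    then have "insert (cmin n) S = S" by (rule mxl) blast
    then show ?thesis by blast
  qed
  have inj: "inj_on (rho n) S"
  proof (rule inj_onI)
    fix x y assume "x \<in> S" "y \<in> S" "rho n x = rho n y"
    then show "x = y" using rho_eq[OF csS csS] cmp by blast
  qed
  have img: "rho n ` S = {rho n (cmin n)..rho n (cmax n)}"
  proof
    show "rho n ` S \<subseteq> {rho n (cmin n)..rho n (cmax n)}"
    proof
      fix w assume "w \<in> rho n ` S"
      then obtain x where "x \<in> S" "w = rho n x" by blast
      then show "w \<in> {rho n (cmin n)..rho n (cmax n)}"
        using rho_mono[OF top[OF csS]] rho_mono[OF bot[OF csS]] by auto
    qed
  next
    show "{rho n (cmin n)..rho n (cmax n)} \<subseteq> rho n ` S"
    proof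
      fix v assume v: "v \<in> {rho n (cmin n)..rho n (cmax n)}"
      show "v \<in> rho n ` S"
      proof (rule ccontr)
        assume nv: "v \<notin> rho n ` S"
        define A where "A = {x\<in>S. v < rho n x}"
        define B where "B = {x\<in>S. rho n x < v}"
        have "rho n (cmax n) \<noteq> v" using maxS nv by (metis image_eqI)
        then have "cmax n \<in> A" unfolding A_def using maxS v by auto
        have "rho n (cmin n) \<noteq> v" using minS nv by (metis image_eqI)
        then have "cmin n \<in> B" unfolding B_def using minS v by auto
        have finA: "finite A" "finite B" using finS unfolding A_def B_def by auto
        have "Min (rho n ` A) \<in> rho n ` A" using finA \<open>cmax n \<in> A\<close> by (intro Min_in) auto
        then obtain X where X: "X \<in> A" "rho n X = Min (rho n ` A)" by auto
        have Xmin: "\<And>z. z \<in> A \<Longrightarrow> rho n X \<le> rho n z" using X finA by simp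
        have "Max (rho n ` B) \<in> rho n ` B" using finA \<open>cmin n \<in> B\<close> by (intro Max_in) auto
        then obtain Y where Y: "Y \<in> B" "rho n Y = Max (rho n ` B)" by auto
        have Ymax: "\<And>z. z \<in> B \<Longrightarrow> rho n z \<le> rho n Y" using Y finA by simp
        have XS: "X \<in> S" "v < rho n X" using X unfolding A_def by auto
        have YS: "Y \<in> S" "rho n Y < v" using Y unfolding B_def by auto
        have pXY: "prec n X Y"
        proof -
          have "prec n X Y \<or> prec n Y X" using cmp XS YS by blast
          moreover have "\<not> prec n Y X"
          proof
            assume "prec n Y X"
            then have "rho n X \<le> rho n Y" by (rule rho_mono)
            then show False using XS YS by linarith
          qed
          ultimately show ?thesis by blast
        qed
        have "X \<noteq> Y" using XS YS by auto
        then obtain E where E: "corner_sum n E" "prec n X E" "prec n E Y" "rho n E = rho n X - 1"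
          using unit_step[OF csS[OF XS(1)] csS[OF YS(1)] pXY] by blast
        have ES: "E \<notin> S"
        proof
          assume "E \<in> S"
          then have "rho n E \<noteq> v" using nv by (metis image_eqI)
          then have "E \<in> A" using \<open>E \<in> S\<close> E(4) XS unfolding A_def by auto
          then have "rho n X \<le> rho n E" by (rule Xmin)
          then show False using E(4) by linarith
        qed
        have "is_chain (CS n) (prec n) (insert E S)"
          unfolding is_chain_def
        proof (intro conjI ballI)
          show "insert E S \<subseteq> CS n" using SC E(1) CS_iff by blast
          have cE: "prec n x E \<or> prec n E x" if z: "x \<in> S" for x
          proof -
            have "rho n x \<noteq> v" using z nv by (metis image_eqI)
            then consider "v < rho n x" | "rho n x < v" by linarith
            then show ?thesis
            proof cases
              case 1
              then have "x \<in> A" using z unfolding A_def by blast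
              then have rx: "rho n X \<le> rho n x" by (rule Xmin)
              have "prec n x X \<or> prec n X x" using cmp z XS(1) by blast
              then have "prec n x X"
              proof
                assume h: "prec n X x"
                then have "rho n x \<le> rho n X" by (rule rho_mono)
                then have "rho n X = rho n x" using rx by linarith
                then have "X = x" by (rule rho_eq[OF csS[OF XS(1)] csS[OF z] disjI1[OF h]])
                then show "prec n x X" unfolding prec_def by simp
              qed
              then have "prec n x E" by (rule prec_trans) (rule E(2))
              then show ?thesis by blast
            next
              case 2
              then have "x \<in> B" using z unfolding B_def by blast
              then have rx: "rho n x \<le> rho n Y" by (rule Ymax)
              have "prec n x Y \<or> prec n Y x" using cmp z YS(1) by blast
              then have "prec n Y x"
              proof
                assume h: "prec n x Y"
                then have "rho n Y \<le> rho n x" by (rule rho_mono)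
                then have "rho n Y = rho n x" using rx by linarith
                then have "Y = x" by (rule rho_eq[OF csS[OF YS(1)] csS[OF z] disjI2[OF h]])
                then show "prec n Y x" unfolding prec_def by simp
              qed
              then have "prec n E x" using prec_trans[OF E(3)] by blast
              then show ?thesis by blast
            qed
          qed
          have rE: "prec n E E" unfolding prec_def by simp
          fix x y assume xy: "x \<in> insert E S" "y \<in> insert E S"
          show "prec n x y \<or> prec n y x"
          proof (cases "x = E")
            case True
            then show ?thesis using xy cE rE by (cases "y = E") auto
          next
            case False
            then have "x \<in> S" using xy by simp
            then show ?thesis using xy cE cmp by (cases "y = E") auto
          qed
        qed
        then have "insert E S = S" by (rule mxl) blast
        then show False using ES by blast
      qed
    qed
  qed
  have "card S = card (rho n ` S)" using inj by (simp add: card_image)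
  also have "\<dots> = nat (rho n (cmax n) - rho n (cmin n) + 1)" unfolding img by simp
  finally have "card S = nat (rho n (cmax n) - rho n (cmin n) + 1)" .
  moreover have "rho n (cmin n) \<le> rho n (cmax n)" using rho_mono[OF top[OF cmin_cs]] .
  ultimately show "chain_length S = nat (rho n (cmax n) - rho n (cmin n))"
    unfolding chain_length_def by linarith
qed

lemma sum_if_split:
  fixes A B :: "nat \<Rightarrow> int"
  assumes "i \<le> n"
  shows "(\<Sum>k\<le>n. if k \<le> i then A k else B k) = (\<Sum>k\<le>i. A k) + ((\<Sum>k\<le>n. B k) - (\<Sum>k\<le>i. B k))"
  using assms
proof (induction n rule: dec_induct)
  case base then show ?case by simp
next
  case (step m) then show ?case by simp
qed

lemma posum:
  fixes c :: int
  assumes "0 \<le> c"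
  shows "2 * (\<Sum>k\<le>m. max 0 (int k - c)) = max 0 (int m - c) * (max 0 (int m - c) + 1)"
proof (induction m)
  case 0 then show ?case using assms by simp
next
  case (Suc m)
  have "2 * (\<Sum>k\<le>Suc m. max 0 (int k - c)) = 2 * (\<Sum>k\<le>m. max 0 (int k - c)) + 2 * max 0 (int m + 1 - c)"
    by (simp add: algebra_simps)
  also have "\<dots> = max 0 (int m - c) * (max 0 (int m - c) + 1) + 2 * max 0 (int m + 1 - c)" using Suc by simp
  also have "\<dots> = max 0 (int (Suc m) - c) * (max 0 (int (Suc m) - c) + 1)"
    using assms by (cases "int m < c") (auto simp: max_def algebra_simps)
  finally show ?case .
qed

lemma inner_le:
  assumes "i \<le> j" "j \<le> n"
  shows "2 * (\<Sum>k\<le>n. cmin n i j k) = int i * int j * (int j + 1) + (if n < i + j then int i * (int i + int j - int n) * (int n - int j) else 0)"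
proof -
  have "(\<Sum>k\<le>n. cmin n i j k) = (\<Sum>k\<le>n. if k \<le> i then int k * LL n i j else int i * max 0 (int k - (int n - int j)))"
    using assms by (intro sum.cong refl) (simp add: cmin_le algebra_simps)
  also have "\<dots> = (\<Sum>k\<le>i. int k * LL n i j) + ((\<Sum>k\<le>n. int i * max 0 (int k - (int n - int j))) - (\<Sum>k\<le>i. int i * max 0 (int k - (int n - int j))))"
    using assms by (intro sum_if_split) simp
  also have "\<dots> = LL n i j * (\<Sum>k\<le>i. int k) + int i * ((\<Sum>k\<le>n. max 0 (int k - (int n - int j))) - (\<Sum>k\<le>i. max 0 (int k - (int n - int j))))"
    by (simp add: sum_distrib_left sum_distrib_right algebra_simps)
  finally have e: "2 * (\<Sum>k\<le>n. cmin n i j k) = LL n i j * (2 * (\<Sum>k\<le>i. int k)) + int i * (2 * (\<Sum>k\<le>n. max 0 (int k - (int n - int j))) - 2 * (\<Sum>k\<le>i. max 0 (int k - (int n - int j))))"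
    by (simp add: algebra_simps)
  have c0: "0 \<le> int n - int j" using assms by simp
  note p1 = posum[OF c0, of n] and p2 = posum[OF c0, of i] and g = gauss2[of i]
  have m1: "max 0 (int n - (int n - int j)) = int j" by simp
  show ?thesis
  proof (cases "n < i + j")
    case True
    have m2: "max 0 (int i - (int n - int j)) = int i + int j - int n" using True by simp
    have l: "LL n i j = int i + int j - int n" using True by simp
    show ?thesis unfolding e p1 p2 g m1 m2 l using True by (simp add: algebra_simps)
  next
    case False
    have m2: "max 0 (int i - (int n - int j)) = 0" using False by simp
    have l: "LL n i j = 0" using False by simp
    show ?thesis unfolding e p1 p2 g m1 m2 l using False by (simp add: algebra_simps)
  qed
qed

lemma inner_gen:
  assumes "i \<le> n" "j \<le> n"
  shows "2 * (\<Sum>k\<le>n. cmin n i j k) = int (min i j) * int (max i j) * (int (max i j) + 1) +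
     (if n < i + j then int (min i j) * (int i + int j - int n) * (int n - int (max i j)) else 0)"
proof (cases "i \<le> j")
  case True then show ?thesis using inner_le[OF True assms(2)] by (simp add: min_def max_def)
next
  case False
  have "(\<Sum>k\<le>n. cmin n i j k) = (\<Sum>k\<le>n. cmin n j i k)" by (simp add: cmin_sym1)
  then show ?thesis using inner_le[of j i n] False assms by (simp add: min_def max_def algebra_simps)
qed

lemma rho_cmin: "2 * rho n (cmin n) = D1 n + D2 n"
proof -
  have "2 * rho n (cmin n) = (\<Sum>i\<le>n. \<Sum>j\<le>n. 2 * (\<Sum>k\<le>n. cmin n i j k))"
    unfolding rho_def by (simp add: sum_distrib_left)
  also have "\<dots> = (\<Sum>i\<le>n. \<Sum>j\<le>n. int (min i j) * int (max i j) * (int (max i j) + 1) +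
     (if n < i + j then int (min i j) * (int i + int j - int n) * (int n - int (max i j)) else 0))"
    by (intro sum.cong refl) (simp add: inner_gen)
  also have "\<dots> = D1 n + D2 n" unfolding D1_def D2_def by (simp add: sum.distrib)
  finally show ?thesis .
qed

lemma sum_rev_atMost: "(\<Sum>k\<le>n. f (n - k)) = (\<Sum>k\<le>(n::nat). (f k :: int))"
  using sum.atLeastAtMost_rev[of f 0 n] by (simp add: atLeast0AtMost)

lemma rho_cmax: "rho n (cmax n) = int (n + 1) * (\<Sum>i\<le>n. int i)^2 - rho n (cmin n)"
proof -
  have "rho n (cmax n) = (\<Sum>i\<le>n. \<Sum>j\<le>n. \<Sum>k\<le>n. int i * int j - cmin n i j (n - k))"
    unfolding rho_def cmax_def dual_def by (intro sum.cong refl) auto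
  also have "\<dots> = (\<Sum>i\<le>n. \<Sum>j\<le>n. int (n+1) * (int i * int j) - (\<Sum>k\<le>n. cmin n i j (n - k)))"
    by (simp add: sum_subtractf)
  also have "\<dots> = (\<Sum>i\<le>n. \<Sum>j\<le>n. int (n+1) * (int i * int j) - (\<Sum>k\<le>n. cmin n i j k))"
    by (simp add: sum_rev_atMost[where f="cmin n _ _"])
  also have "\<dots> = int (n+1) * (\<Sum>i\<le>n. \<Sum>j\<le>n. int i * int j) - rho n (cmin n)"
    unfolding rho_def by (simp add: sum_subtractf sum_distrib_left)
  also have "(\<Sum>i\<le>n. \<Sum>j\<le>n. int i * int j) = (\<Sum>i\<le>n. int i)^2"
    by (simp add: power2_eq_square sum_product)
  finally show ?thesis .
qed

lemma rank_int: "480 * (rho n (cmax n) - rho n (cmin n)) = 18 * int n^5 - 20 * int n^3 + (17 + 15 * (-1)^n) * int n"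
proof -
  have "rho n (cmax n) - rho n (cmin n) = int (n + 1) * (\<Sum>i\<le>n. int i)^2 - (D1 n + D2 n)"
    using rho_cmax[of n] rho_cmin[of n] by simp
  then have "480 * (rho n (cmax n) - rho n (cmin n)) = 120 * int (n + 1) * (2 * (\<Sum>i\<le>n. int i))^2 - 8 * (60 * D1 n) - 480 * D2 n"
    by (simp add: algebra_simps power2_eq_square)
  also have "\<dots> = 18 * int n^5 - 20 * int n^3 + (17 + 15 * (-1)^n) * int n"
    unfolding gauss2 D1_closed D2_closed by (simp add: algebra_simps eval_nat_numeral)
  finally show ?thesis .
qed

lemma powr_part: "(4::real) powr (1 + (-1) ^ n) = (17 + 15 * (-1) ^ n) / 2"
proof (cases "even n")
  case True
  then have "(-1::real) ^ n = 1" by simp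
  then show ?thesis by (simp add: powr_numeral)
next
  case False
  then have "(-1::real) ^ n = -1" by simp
  then show ?thesis by simp
qed

theorem mainTheorem15:
  fixes n :: nat
  shows "\<exists>r. graded_of_rank (CS n) (prec n) r \<and>
    real r = (9 * real n ^ 5 - 10 * real n ^ 3 + 4 powr (1 + (-1) ^ n) * real n) / 240"
proof (intro exI conjI)
  show "graded_of_rank (CS n) (prec n) (nat (rho n (cmax n) - rho n (cmin n)))" by (rule graded)
  have nn: "rho n (cmin n) \<le> rho n (cmax n)"
    using rho_mono[of n "cmax n" "cmin n"] cmax_upper[OF cmin_cs] unfolding prec_def by blast
  have e: "real (nat (rho n (cmax n) - rho n (cmin n))) = real_of_int (rho n (cmax n) - rho n (cmin n))"
    using nn by simp
  have "real_of_int (480 * (rho n (cmax n) - rho n (cmin n))) = real_of_int (18 * int n^5 - 20 * int n^3 + (17 + 15 * (-1)^n) * int n)"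
    by (simp only: rank_int)
  then have "480 * real_of_int (rho n (cmax n) - rho n (cmin n)) = 18 * real n^5 - 20 * real n^3 + (17 + 15 * (-1)^n) * real n"
    by simp
  then show "real (nat (rho n (cmax n) - rho n (cmin n))) = (9 * real n ^ 5 - 10 * real n ^ 3 + 4 powr (1 + (-1) ^ n) * real n) / 240"
    unfolding e powr_part by (simp add: field_simps)
qed

end
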